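(* Let $(X_m)_{m\in[0,\zeta)}$ be a discrete-time (sub-)Markov chain on a countable set $S$ with lifetime $\zeta$, started at $x_0$. Fix $w\in S\setminus\{x_0\}$ and let $T_1=\inf\{n>0:X_n=w\}$, $T_N=\inf\{m>T_{N-1}:X_m=w\}$ ($\inf\emptyset=\infty$). For $N\ge1$ with $\mathbb P[T_N<\infty]>0$, let $LE[0,T_N]$ be the loop erasure of the finite path $(X_0,\ldots,X_{T_N})$. Then the conditional law of $LE[0,T_N]$ given $\{T_N<\infty\}$ equals the conditional law of $LE[0,T_1]$ given $\{T_1<\infty\}$.
   Context: Loop erasure of a finite path $(\xi_0,\ldots,\xi_K)$: set $y_0=\xi_0$; if $y_i$ is defined and $y_i\ne\xi_K$, let $T_i=1+\max\{n\le K:\xi_n=y_i\}$ and $y_{i+1}=\xi_{T_i}$; stop when $y_i=\xi_K$. The loop-erased path is $(y_0,y_1,\ldots)$, a self-avoiding path from $\xi_0$ to $\xi_K$. *)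

theory Defs
  imports "HOL-Probability.Probability"
begin

definition substochastic :: "('a::countable \<Rightarrow> 'a \<Rightarrow> real) \<Rightarrow> bool" where
  "substochastic p \<longleftrightarrow>
     (\<forall>x y. 0 \<le> p x y) \<and> (\<forall>x. p x summable_on UNIV \<and> infsum (p x) UNIV \<le> 1)"

text \<open>A discrete-time sub-Markov chain with kernel p started at x0 and killed at its
  lifetime: X n \<omega> = None means n \<ge> lifetime (the cemetery is absorbing); the
  finite-dimensional distributions are those of the chain.\<close>
definition sub_markov_chain ::
  "'w measure \<Rightarrow> (nat \<Rightarrow> 'w \<Rightarrow> 'a::countable option) \<Rightarrow> ('a \<Rightarrow> 'a \<Rightarrow> real) \<Rightarrow> 'a \<Rightarrow> bool" where
  "sub_markov_chain M X p x0 \<longleftrightarrow>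
     prob_space M \<and> substochastic p \<and>
     (\<forall>n. X n \<in> measurable M (count_space UNIV)) \<and>
     (\<forall>n. \<forall>\<omega>\<in>space M. X n \<omega> = None \<longrightarrow> X (Suc n) \<omega> = None) \<and>
     (\<forall>n \<xi>. measure M {\<omega>\<in>space M. \<forall>i\<le>n. X i \<omega> = Some (\<xi> i)} =
        (if \<xi> 0 = x0 then (\<Prod>i<n. p (\<xi> i) (\<xi> (Suc i))) else 0))"

fun hit_time :: "(nat \<Rightarrow> 'w \<Rightarrow> 'a option) \<Rightarrow> 'a \<Rightarrow> nat \<Rightarrow> 'w \<Rightarrow> enat" where
  "hit_time X w 0 \<omega> = 0"
| "hit_time X w (Suc N) \<omega> =
     (case hit_time X w N \<omega> of
        \<infinity> \<Rightarrow> \<infinity>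
      | enat t \<Rightarrow> (if \<exists>m>t. X m \<omega> = Some w
                   then enat (LEAST m. m > t \<and> X m \<omega> = Some w) else \<infinity>))"

text \<open>Loop erasure of a finite path (as in the context): keep x, then continue with the
  part of the path strictly after the last visit to x.\<close>
function loop_erase :: "'a list \<Rightarrow> 'a list" where
  "loop_erase [] = []"
| "loop_erase (x # xs) = x # loop_erase (rev (takeWhile (\<lambda>y. y \<noteq> x) (rev xs)))"
  by pat_completeness auto
termination
  by (relation "Wellfounded.measure length") (auto simp: le_imp_less_Suc intro!: le_imp_less_Suc order.trans[OF length_takeWhile_le])

definition path_upto :: "(nat \<Rightarrow> 'w \<Rightarrow> 'a option) \<Rightarrow> nat \<Rightarrow> 'w \<Rightarrow> 'a list" where
  "path_upto X t \<omega> = map (\<lambda>i. the (X i \<omega>)) [0..<Suc t]"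

end

theory Submission imports Defs begin


definition le_step :: "'a list \<Rightarrow> 'a \<Rightarrow> 'a list" where
  "le_step L y = (if y \<in> set L then takeWhile (\<lambda>z. z \<noteq> y) L @ [y] else L @ [y])"

lemma le_snoc: "loop_erase (xs @ [y]) = le_step (loop_erase xs) y"
proof (induction xs arbitrary: y rule: loop_erase.induct)
  case 1
  then show ?case by (simp add: le_step_def)
next
  case (2 x xs)
  show ?case
  proof (cases "y = x")
    case True
    then show ?thesis by (simp add: le_step_def)
  next
    case False
    have "loop_erase ((x # xs) @ [y]) = x # loop_erase (rev (takeWhile (\<lambda>z. z \<noteq> x) (rev xs)) @ [y])"
      using False by simp
    also have "\<dots> = x # le_step (loop_erase (rev (takeWhile (\<lambda>z. z \<noteq> x) (rev xs)))) y"
      using 2 by simp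
    finally show ?thesis using False by (simp add: le_step_def)
  qed
qed

lemma le_append: "loop_erase (xs @ ys) = foldl le_step (loop_erase xs) ys"
proof (induction ys arbitrary: xs)
  case Nil then show ?case by simp
next
  case (Cons y ys)
  have "loop_erase (xs @ y # ys) = loop_erase ((xs @ [y]) @ ys)" by simp
  also have "\<dots> = foldl le_step (loop_erase (xs @ [y])) ys" by (rule Cons)
  finally show ?case by (simp add: le_snoc)
qed

lemma le_fold: "loop_erase ys = foldl le_step [] ys"
  using le_append[of "[]" ys] by simp

lemma distinct_le_step: "distinct L \<Longrightarrow> distinct (le_step L y)"
  unfolding le_step_def
  by (auto dest: set_takeWhileD simp: distinct_takeWhile)

lemma set_le_step: "set (le_step L y) \<subseteq> insert y (set L)"
  unfolding le_step_def by (auto dest: set_takeWhileD)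

lemma le_distinct: "distinct (loop_erase xs)"
  by (induction xs rule: rev_induct) (auto simp: le_snoc distinct_le_step)

lemma le_set: "set (loop_erase xs) \<subseteq> set xs"
  apply (induction xs rule: rev_induct)
   apply simp
  using set_le_step by (fastforce simp: le_snoc)

lemma le_last: "xs \<noteq> [] \<Longrightarrow> last (loop_erase xs) = last xs"
  by (induction xs rule: rev_induct) (auto simp: le_snoc le_step_def)

lemma le_hd: "xs \<noteq> [] \<Longrightarrow> hd (loop_erase xs) = hd xs"
  by (cases xs) auto

lemma le_nil_iff[simp]: "loop_erase xs = [] \<longleftrightarrow> xs = []"
  by (cases xs) auto

lemma le_id: "distinct xs \<Longrightarrow> loop_erase xs = xs"
  by (induction xs rule: rev_induct) (auto simp: le_snoc le_step_def)

lemma le_le: "loop_erase (loop_erase xs @ ys) = loop_erase (xs @ ys)"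
  by (simp add: le_append le_id le_distinct)

lemma fold_le_step_avoid:
  "set ys \<inter> set L = {} \<Longrightarrow> foldl le_step (L @ M) ys = L @ foldl le_step M ys"
proof (induction ys arbitrary: M)
  case Nil then show ?case by simp
next
  case (Cons y ys)
  have yL: "y \<notin> set L" using Cons.prems by auto
  have "le_step (L @ M) y = L @ le_step M y"
  proof -
    have "takeWhile (\<lambda>z. z \<noteq> y) (L @ M) = L @ takeWhile (\<lambda>z. z \<noteq> y) M"
      by (rule takeWhile_append2) (use yL in auto)
    then show ?thesis using yL by (auto simp: le_step_def)
  qed
  then show ?case using Cons by simp
qed

lemma le_append_avoid:
  "set ys \<inter> set (loop_erase xs) = {} \<Longrightarrow> loop_erase (xs @ ys) = loop_erase xs @ loop_erase ys"
  using fold_le_step_avoid[of ys "loop_erase xs" "[]"] by (simp add: le_append le_fold)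

lemma le_cycle: "loop_erase (v # a @ v # b) = loop_erase (v # b)"
proof -
  have "loop_erase ((v # a) @ (v # b)) = foldl le_step (loop_erase (v # a)) (v # b)"
    by (rule le_append)
  also have "\<dots> = foldl le_step (le_step (loop_erase (v # a)) v) b" by simp
  also have "le_step (loop_erase (v # a)) v = loop_erase [v]" by (simp add: le_step_def)
  also have "foldl le_step (loop_erase [v]) b = loop_erase ([v] @ b)" by (rule le_append[symmetric])
  finally show ?thesis by simp
qed

definition suf :: "'a set \<Rightarrow> 'a list \<Rightarrow> 'a list" where
  "suf S xs = rev (takeWhile (\<lambda>y. y \<notin> S) (rev xs))"
definition pre :: "'a set \<Rightarrow> 'a list \<Rightarrow> 'a list" where
  "pre S xs = rev (dropWhile (\<lambda>y. y \<notin> S) (rev xs))"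

lemma pre_suf: "pre S xs @ suf S xs = xs"
  unfolding pre_def suf_def by (metis rev_append rev_rev_ident takeWhile_dropWhile_id)

lemma suf_unique:
  assumes "set b \<inter> S = {}" "a = [] \<or> last a \<in> S"
  shows "suf S (a @ b) = b \<and> pre S (a @ b) = a"
proof -
  have tw: "takeWhile (\<lambda>y. y \<notin> S) (rev a) = []" and dw: "dropWhile (\<lambda>y. y \<notin> S) (rev a) = rev a"
    using assms(2) by (cases "rev a"; auto simp: last_rev[symmetric] hd_rev)+
  have "takeWhile (\<lambda>y. y \<notin> S) (rev b @ rev a) = rev b @ takeWhile (\<lambda>y. y \<notin> S) (rev a)"
    by (rule takeWhile_append2) (use assms(1) in auto)
  moreover have "dropWhile (\<lambda>y. y \<notin> S) (rev b @ rev a) = dropWhile (\<lambda>y. y \<notin> S) (rev a)"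
    by (rule dropWhile_append2) (use assms(1) in auto)
  ultimately show ?thesis using tw dw by (simp add: suf_def pre_def)
qed

lemma le_split:
  "k < length (loop_erase xs) \<Longrightarrow> \<exists>a b. xs = a @ b \<and> loop_erase a = take k (loop_erase xs) \<and>
     loop_erase b = drop k (loop_erase xs) \<and> set b \<inter> set (take k (loop_erase xs)) = {} \<and>
     (a = [] \<or> last a \<in> set (take k (loop_erase xs)))"
proof (induction xs arbitrary: k rule: loop_erase.induct)
  case 1
  then show ?case by simp
next
  case (2 x xs)
  define s where "s = rev (takeWhile (\<lambda>y. y \<noteq> x) (rev xs))"
  define pr where "pr = rev (dropWhile (\<lambda>y. y \<noteq> x) (rev xs))"
  have xs_eq: "xs = pr @ s"
    unfolding pr_def s_def by (metis rev_append rev_rev_ident takeWhile_dropWhile_id)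
  have xs_notin: "x \<notin> set s" unfolding s_def by (auto dest: set_takeWhileD)
  have pr_last: "pr = [] \<or> last pr = x"
  proof (cases "dropWhile (\<lambda>y. y \<noteq> x) (rev xs) = []")
    case True then show ?thesis by (simp add: pr_def)
  next
    case False
    then have "hd (dropWhile (\<lambda>y. y \<noteq> x) (rev xs)) = x"
      using hd_dropWhile[OF False] by simp
    then show ?thesis using False by (simp add: pr_def last_rev)
  qed
  have LE: "loop_erase (x # xs) = x # loop_erase s" by (simp add: s_def)
  show ?case
  proof (cases k)
    case 0
    show ?thesis by (rule exI[of _ "[]"], rule exI[of _ "x # xs"]) (simp add: 0)
  next
    case (Suc k')
    with "2.prems" LE have k': "k' < length (loop_erase s)" by simp
    from "2.IH"[OF k'[unfolded s_def]] obtain s1 s2 where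
      s12: "rev (takeWhile (\<lambda>y. y \<noteq> x) (rev xs)) = s1 @ s2"
      and L1: "loop_erase s1 = take k' (loop_erase s)"
      and L2: "loop_erase s2 = drop k' (loop_erase s)"
      and D: "set s2 \<inter> set (take k' (loop_erase s)) = {}"
      and La: "s1 = [] \<or> last s1 \<in> set (take k' (loop_erase s))"
      unfolding s_def by blast
    have s12': "s = s1 @ s2" using s12 s_def by simp
    have x1: "x \<notin> set s1" "x \<notin> set s2" using xs_notin s12' by auto
    have tw: "takeWhile (\<lambda>y. y \<noteq> x) (rev (pr @ s1)) = rev s1"
    proof -
      have "takeWhile (\<lambda>y. y \<noteq> x) (rev s1 @ rev pr) = rev s1 @ takeWhile (\<lambda>y. y \<noteq> x) (rev pr)"
        by (rule takeWhile_append2) (use x1 in auto)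
      moreover have "takeWhile (\<lambda>y. y \<noteq> x) (rev pr) = []"
        using pr_last by (cases "rev pr") (auto simp: last_rev[symmetric] hd_rev)
      ultimately show ?thesis by simp
    qed
    have "loop_erase (x # pr @ s1) = x # loop_erase s1"
      using tw by simp
    show ?thesis
    proof (rule exI[of _ "x # pr @ s1"], rule exI[of _ s2], intro conjI)
      show "x # xs = (x # pr @ s1) @ s2" using xs_eq s12' by simp
      show "loop_erase (x # pr @ s1) = take k (loop_erase (x # xs))"
        using tw L1 LE Suc by simp
      show "loop_erase s2 = drop k (loop_erase (x # xs))" using L2 LE Suc by simp
      show "set s2 \<inter> set (take k (loop_erase (x # xs))) = {}" using D x1 LE Suc by auto
      show "x # pr @ s1 = [] \<or> last (x # pr @ s1) \<in> set (take k (loop_erase (x # xs)))"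
      proof -
        have tk: "set (take k (loop_erase (x # xs))) = insert x (set (take k' (loop_erase s)))"
          using LE Suc by simp
        show ?thesis
        proof (cases "s1 = []")
          case True
          then have "last (x # pr @ s1) = x" using pr_last by (cases "pr = []") auto
          then show ?thesis using tk by simp
        next
          case False
          then have "last (x # pr @ s1) = last s1" by simp
          then show ?thesis using tk La False by simp
        qed
      qed
    qed
  qed
qed

definition le_idx :: "'a list \<Rightarrow> 'a list \<Rightarrow> nat" where
  "le_idx a e = (LEAST k. loop_erase a ! k \<in> set e)"

definition Psi :: "'a list \<times> 'a list \<Rightarrow> 'a list \<times> 'a list" where
  "Psi ae = (case ae of (a, e) \<Rightarrow>
     (let g = loop_erase a; i = le_idx a e; S = set (take i g); v = g ! i in
       (pre S a @ dropWhile (\<lambda>z. z \<noteq> v) e, takeWhile (\<lambda>z. z \<noteq> v) e @ suf S a)))"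

lemma Psi_core:
  assumes a: "a \<noteq> []" and e: "e \<noteq> []" and last: "last a = last e"
  shows "\<exists>a1 a2 e1 e2 v. a = a1 @ a2 \<and> e = e1 @ e2 \<and> Psi (a, e) = (a1 @ e2, e1 @ a2) \<and>
     a2 \<noteq> [] \<and> e2 \<noteq> [] \<and> hd a2 = v \<and> hd e2 = v \<and>
     loop_erase (a1 @ e2) = loop_erase (a @ e) \<and> Psi (a1 @ e2, e1 @ a2) = (a, e)"
proof -
  define g where "g = loop_erase a"
  define i where "i = le_idx a e"
  define S where "S = set (take i g)"
  define v where "v = g ! i"
  have gne: "g \<noteq> []" using a by (simp add: g_def)
  have "g ! (length g - 1) = last a"
    using gne le_last[OF a] by (simp add: g_def last_conv_nth)
  then have ex: "g ! (length g - 1) \<in> set e" using last e by simp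
  have iLeast: "i = (LEAST k. g ! k \<in> set e)" by (simp add: i_def le_idx_def g_def)
  have vin: "v \<in> set e" unfolding v_def iLeast by (rule LeastI[of "\<lambda>k. g ! k \<in> set e", OF ex])
  have ile: "i \<le> length g - 1" unfolding iLeast by (rule Least_le[of "\<lambda>k. g ! k \<in> set e", OF ex])
  then have ilt: "i < length g" using gne by (cases g) auto
  have Se: "set e \<inter> S = {}"
  proof -
    { fix z assume z: "z \<in> S" "z \<in> set e"
      then obtain k where k: "k < i" "z = g ! k" unfolding S_def using ilt
        by (auto simp: in_set_conv_nth)
      then have "g ! k \<notin> set e" unfolding iLeast using not_less_Least by blast
      with k z have False by simp }
    then show ?thesis by blast
  qed
  obtain a1 a2 where A: "a = a1 @ a2" and LA1: "loop_erase a1 = take i g"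
    and LA2: "loop_erase a2 = drop i g" and DA2: "set a2 \<inter> S = {}"
    and LastA1: "a1 = [] \<or> last a1 \<in> S"
    using le_split[OF ilt[unfolded g_def]] unfolding S_def g_def by blast
  have a2ne: "a2 \<noteq> []" using LA2 ilt by auto
  have hda2: "hd a2 = v"
    using le_hd[OF a2ne] LA2 ilt by (simp add: v_def hd_drop_conv_nth)
  have sufa: "suf S a = a2" and prea: "pre S a = a1" using suf_unique[OF DA2 LastA1] A by auto
  define e1 where "e1 = takeWhile (\<lambda>z. z \<noteq> v) e"
  define e2 where "e2 = dropWhile (\<lambda>z. z \<noteq> v) e"
  have E: "e = e1 @ e2" by (simp add: e1_def e2_def)
  have e2ne: "e2 \<noteq> []" using vin by (auto simp: e2_def dropWhile_eq_Nil_conv)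
  have hde2: "hd e2 = v" using hd_dropWhile[of "\<lambda>z. z \<noteq> v" e] e2ne by (simp add: e2_def)
  have e1v: "v \<notin> set e1" by (auto simp: e1_def dest: set_takeWhileD)
  have Psi1: "Psi (a, e) = (a1 @ e2, e1 @ a2)"
    by (simp add: Psi_def Let_def g_def[symmetric] i_def[symmetric] S_def[symmetric] v_def[symmetric]
        sufa prea e1_def e2_def)
  have De1: "set e1 \<inter> S = {}" and De2: "set e2 \<inter> S = {}" using Se E by auto
  have LEa': "loop_erase (a1 @ e2) = take i g @ loop_erase e2"
    using le_append_avoid[of e2 a1] De2 LA1 S_def by auto
  have LEae: "loop_erase (a1 @ e2) = loop_erase (a @ e)"
  proof -
    have "loop_erase (a @ e) = loop_erase (a1 @ (a2 @ e1 @ e2))" using A E by simp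
    also have "\<dots> = loop_erase a1 @ loop_erase (a2 @ e1 @ e2)"
      by (rule le_append_avoid) (use DA2 De1 De2 LA1 S_def in auto)
    also have "loop_erase (a2 @ e1 @ e2) = loop_erase e2"
    proof -
      obtain t2 where t2: "a2 = v # t2" using a2ne hda2 by (cases a2) auto
      obtain u2 where u2: "e2 = v # u2" using e2ne hde2 by (cases e2) auto
      show ?thesis using le_cycle[of v "t2 @ e1" u2] t2 u2 by simp
    qed
    finally show ?thesis using LEa' LA1 by simp
  qed
  define g' where "g' = loop_erase (a1 @ e2)"
  have lt: "length (take i g) = i" using ilt by simp
  have g'i: "g' ! i = v"
    using LEa' lt e2ne le_hd[OF e2ne] hde2 by (simp add: g'_def nth_append hd_conv_nth[symmetric])
  have g'k: "k < i \<Longrightarrow> g' ! k \<in> S" for k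
    using LEa' lt ilt by (auto simp: g'_def nth_append S_def in_set_conv_nth)
  have i': "le_idx (a1 @ e2) (e1 @ a2) = i"
    unfolding le_idx_def g'_def[symmetric]
  proof (rule Least_equality)
    show "g' ! i \<in> set (e1 @ a2)" using g'i hda2 hd_in_set[OF a2ne] by simp
  next
    fix k assume "g' ! k \<in> set (e1 @ a2)"
    then have kin: "g' ! k \<in> set e1 \<or> g' ! k \<in> set a2" by simp
    show "i \<le> k"
    proof (rule ccontr)
      assume "\<not> i \<le> k"
      then have "g' ! k \<in> S" using g'k by simp
      then show False using kin De1 DA2 by blast
    qed
  qed
  have take': "take i g' = take i g" using LEa' lt by (simp add: g'_def)
  have sufa': "suf S (a1 @ e2) = e2" and prea': "pre S (a1 @ e2) = a1"
    using suf_unique[OF De2 LastA1] by auto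
  have tw: "takeWhile (\<lambda>z. z \<noteq> v) (e1 @ a2) = e1"
  proof -
    have "takeWhile (\<lambda>z. z \<noteq> v) (e1 @ a2) = e1 @ takeWhile (\<lambda>z. z \<noteq> v) a2"
      by (rule takeWhile_append2) (use e1v in auto)
    then show ?thesis using a2ne hda2 by (cases a2) auto
  qed
  have dw: "dropWhile (\<lambda>z. z \<noteq> v) (e1 @ a2) = a2"
  proof -
    have "dropWhile (\<lambda>z. z \<noteq> v) (e1 @ a2) = dropWhile (\<lambda>z. z \<noteq> v) a2"
      by (rule dropWhile_append2) (use e1v in auto)
    then show ?thesis using a2ne hda2 by (cases a2) auto
  qed
  have Psi2: "Psi (a1 @ e2, e1 @ a2) = (a, e)"
    unfolding Psi_def using i' take' g'i sufa' prea' tw dw A E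
    by (simp add: Let_def g'_def[symmetric] S_def)
  show ?thesis
    apply (rule exI[of _ a1], rule exI[of _ a2], rule exI[of _ e1], rule exI[of _ e2], rule exI[of _ v])
    using A E Psi1 a2ne e2ne hda2 hde2 LEae Psi2 by (intro conjI)
qed

fun wt :: "('a \<Rightarrow> 'a \<Rightarrow> real) \<Rightarrow> 'a list \<Rightarrow> real" where
  "wt p (x # y # r) = p x y * wt p (y # r)"
| "wt p _ = 1"

lemma wt_split: "b \<noteq> [] \<Longrightarrow> wt p (a @ b) = wt p (a @ [hd b]) * wt p b"
proof (induction a)
  case Nil then show ?case by (cases b) auto
next
  case (Cons x a)
  show ?case
  proof (cases a)
    case Nil then show ?thesis using Cons.prems by (cases b) auto
  next
    case (Cons y a')
    then show ?thesis using Cons.IH[OF \<open>b \<noteq> []\<close>] by simp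
  qed
qed

lemma wt_prod: "wt p l = (\<Prod>i < length l - 1. p (l ! i) (l ! Suc i))"
proof (induction p l rule: wt.induct)
  case (1 p x y r)
  then show ?case by (simp add: prod.lessThan_Suc_shift del: prod.lessThan_Suc)
qed auto

lemma wt_nonneg: "(\<And>x y. 0 \<le> p x y) \<Longrightarrow> 0 \<le> wt p l"
  by (induction p l rule: wt.induct) auto

definition P1set :: "'a \<Rightarrow> 'a \<Rightarrow> 'a list set" where
  "P1set x0 w = {a. a \<noteq> [] \<and> hd a = x0 \<and> last a = w \<and> w \<notin> set (butlast a)}"
definition Eset :: "'a \<Rightarrow> 'a list set" where
  "Eset w = {e. e \<noteq> [] \<and> last e = w \<and> w \<notin> set (butlast e)}"

lemma Psi_props:
  assumes "z \<in> P1set x0 w \<times> Eset w"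
  shows "Psi z \<in> P1set x0 w \<times> Eset w" "Psi (Psi z) = z"
    "loop_erase (fst (Psi z)) = loop_erase (fst z @ snd z)"
    "wt p (fst (Psi z)) * wt p (w # snd (Psi z)) = wt p (fst z) * wt p (w # snd z)"
proof -
  obtain a e where z: "z = (a, e)" by (cases z)
  have a: "a \<noteq> []" "hd a = x0" "last a = w" "w \<notin> set (butlast a)"
    and e: "e \<noteq> []" "last e = w" "w \<notin> set (butlast e)"
    using assms z by (auto simp: P1set_def Eset_def)
  obtain a1 a2 e1 e2 v where A: "a = a1 @ a2" and E: "e = e1 @ e2" and
    Ps: "Psi (a, e) = (a1 @ e2, e1 @ a2)" and ne: "a2 \<noteq> []" "e2 \<noteq> []"
    and hd: "hd a2 = v" "hd e2 = v" and LE: "loop_erase (a1 @ e2) = loop_erase (a @ e)"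
    and inv: "Psi (a1 @ e2, e1 @ a2) = (a, e)"
    using Psi_core[OF a(1) e(1)] a(3) e(2) by metis
  have ba: "butlast a = a1 @ butlast a2" using A ne by (simp add: butlast_append)
  have be: "butlast e = e1 @ butlast e2" using E ne by (simp add: butlast_append)
  have "hd (a1 @ e2) = x0"
  proof (cases "a1 = []")
    case True then show ?thesis using A a(2) hd ne by simp
  next
    case False then show ?thesis using A a(2) by simp
  qed
  moreover have "last (a1 @ e2) = w" "last (e1 @ a2) = w" using ne A E a(3) e(2) by auto
  moreover have "w \<notin> set (butlast (a1 @ e2))" "w \<notin> set (butlast (e1 @ a2))"
    using ba be a(4) e(3) ne by (auto simp: butlast_append)
  ultimately show "Psi z \<in> P1set x0 w \<times> Eset w" using Ps z ne by (simp add: P1set_def Eset_def)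
  show "Psi (Psi z) = z" using Ps inv z by simp
  show "loop_erase (fst (Psi z)) = loop_erase (fst z @ snd z)" using Ps LE z by simp
  have w1: "wt p a = wt p (a1 @ [v]) * wt p a2" using wt_split[OF ne(1), of p a1] A hd by simp
  have w2: "wt p (a1 @ e2) = wt p (a1 @ [v]) * wt p e2" using wt_split[OF ne(2), of p a1] hd by simp
  have w3: "wt p ((w # e1) @ e2) = wt p ((w # e1) @ [v]) * wt p e2" using wt_split[OF ne(2), of p "w # e1"] hd by simp
  have w4: "wt p ((w # e1) @ a2) = wt p ((w # e1) @ [v]) * wt p a2" using wt_split[OF ne(1), of p "w # e1"] hd by simp
  show "wt p (fst (Psi z)) * wt p (w # snd (Psi z)) = wt p (fst z) * wt p (w # snd z)"
    using w1 w2 w3 w4 Ps z E by simp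
qed

lemma Psi_bij: "bij_betw Psi (P1set x0 w \<times> Eset w) (P1set x0 w \<times> Eset w)"
  by (rule bij_betwI[where g = Psi]) (auto simp: Psi_props)

lemma nn_integral_count_space_prod:
  fixes A :: "'a::countable set" and B :: "'b::countable set"
  shows "(\<integral>\<^sup>+z. f z \<partial>count_space (A \<times> B)) = (\<integral>\<^sup>+x. \<integral>\<^sup>+y. f (x, y) \<partial>count_space B \<partial>count_space A)"
proof -
  interpret B: sigma_finite_measure "count_space B"
    by (rule sigma_finite_measure_count_space_countable) simp
  have "(\<integral>\<^sup>+x. \<integral>\<^sup>+y. f (x, y) \<partial>count_space B \<partial>count_space A) = integral\<^sup>N (count_space A \<Otimes>\<^sub>M count_space B) f"
    by (rule B.nn_integral_fst) (simp add: pair_measure_countable)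
  then show ?thesis by (simp add: pair_measure_countable)
qed

definition PN :: "'a \<Rightarrow> 'a \<Rightarrow> nat \<Rightarrow> 'a list set" where
  "PN x0 w N = {a. a \<noteq> [] \<and> hd a = x0 \<and> last a = w \<and> count_list (tl a) w = N}"

lemma PN1: "x0 \<noteq> w \<Longrightarrow> PN x0 w 1 = P1set x0 w"
proof (intro set_eqI iffI)
  fix a assume x0w: "x0 \<noteq> w"
  { assume "a \<in> PN x0 w 1"
    then have a: "a \<noteq> []" "hd a = x0" "last a = w" "count_list (tl a) w = 1" by (auto simp: PN_def)
    obtain t where t: "a = x0 # t" using a by (cases a) auto
    have tne: "t \<noteq> []" using a(4) t by auto
    have tl: "t = butlast t @ [w]" using tne a(3) t by (metis append_butlast_last_id last_ConsR)
    have "count_list (butlast t @ [w]) w = 1" using a(4) t tl by simp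
    then have "w \<notin> set (butlast t)" by (simp add: count_list_0_iff)
    then show "a \<in> P1set x0 w" using a t x0w tne by (simp add: P1set_def)
  }
  { assume "a \<in> P1set x0 w"
    then have a: "a \<noteq> []" "hd a = x0" "last a = w" "w \<notin> set (butlast a)" by (auto simp: P1set_def)
    obtain t where t: "a = x0 # t" using a by (cases a) auto
    have tne: "t \<noteq> []" using a(3) t x0w by auto
    have tl: "t = butlast t @ [w]" using tne a(3) t by (metis append_butlast_last_id last_ConsR)
    have "w \<notin> set (butlast t)" using a(4) t tne by simp
    then have "count_list t w = 1" by (subst tl) (simp add: count_list_0_iff)
    then show "a \<in> PN x0 w 1" using a t by (simp add: PN_def)
  }
qed

lemma PN_decomp:
  assumes N: "N \<ge> 1"
  shows "bij_betw (\<lambda>(a, e). a @ e) (PN x0 w N \<times> Eset w) (PN x0 w (Suc N))"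
proof (rule bij_betw_imageI)
  show "inj_on (\<lambda>(a, e). a @ e) (PN x0 w N \<times> Eset w)"
  proof (rule inj_onI)
    fix x y
    assume x: "x \<in> PN x0 w N \<times> Eset w" and y: "y \<in> PN x0 w N \<times> Eset w"
      and xy: "(\<lambda>(a, e). a @ e) x = (\<lambda>(a, e). a @ e) y"
    obtain a e where xae: "x = (a, e)" by (cases x)
    obtain a' e' where yae: "y = (a', e')" by (cases y)
    have A: "(a, e) \<in> PN x0 w N \<times> Eset w" "(a', e') \<in> PN x0 w N \<times> Eset w" using x y xae yae by auto
    have eq: "a @ e = a' @ e'" using xy xae yae by simp
    have key: "a = a'" if "(a, e) \<in> PN x0 w N \<times> Eset w" "(a', e') \<in> PN x0 w N \<times> Eset w"
      "a @ e = a' @ e'" "length a \<le> length a'" for a e a' e'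
    proof -
      from that(3,4) obtain us where us: "a' = a @ us"
        by (metis append_eq_append_conv_if append_take_drop_id)
      have "count_list (tl a') w = count_list (tl a) w + count_list us w"
        using us that(1) by (auto simp: PN_def)
      then have "count_list us w = 0" using that(1,2) by (auto simp: PN_def)
      moreover have "us \<noteq> [] \<Longrightarrow> last us = w" using us that(2) by (auto simp: PN_def)
      ultimately have "us = []" by (metis count_list_0_iff last_in_set)
      then show ?thesis using us by simp
    qed
    show "x = y"
    proof (cases "length a \<le> length a'")
      case True then show ?thesis using key[OF A eq] eq xae yae by simp
    next
      case False then show ?thesis using key[OF A(2,1) eq[symmetric]] eq xae yae by simp
    qed
  qed
next
  show "(\<lambda>(a, e). a @ e) ` (PN x0 w N \<times> Eset w) = PN x0 w (Suc N)"
  proof (intro set_eqI iffI)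
    fix x assume "x \<in> (\<lambda>(a, e). a @ e) ` (PN x0 w N \<times> Eset w)"
    then obtain a e where x: "x = a @ e" and a: "a \<in> PN x0 w N" and e: "e \<in> Eset w" by auto
    have e': "e = butlast e @ [w]" "w \<notin> set (butlast e)" using e by (auto simp: Eset_def)
    have "count_list e w = 1" by (subst e'(1)) (simp add: e'(2) count_list_0_iff)
    then show "x \<in> PN x0 w (Suc N)" using a e x by (auto simp: PN_def Eset_def)
  next
    fix x assume x: "x \<in> PN x0 w (Suc N)"
    then have xne: "x \<noteq> []" and hx: "hd x = x0" and lx: "last x = w" and cx: "count_list (tl x) w = Suc N"
      by (auto simp: PN_def)
    have tne: "tl x \<noteq> []" using cx by auto
    have tl_eq: "tl x = butlast (tl x) @ [w]" using tne lx xne by (metis append_butlast_last_id last_tl)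
    have "count_list (butlast (tl x)) w = N" using cx by (subst (asm) tl_eq) simp
    then have "w \<in> set (butlast (tl x))" using N by (metis count_notin not_one_le_zero)
    then obtain u v where uv: "butlast (tl x) = u @ w # v" and wv: "w \<notin> set v"
      using split_list_last by metis
    define a where "a = hd x # u @ [w]"
    define e where "e = v @ [w]"
    have xe: "x = a @ e" unfolding a_def e_def
      using xne tl_eq uv by (metis append.assoc append_Cons append_Nil list.collapse)
    have "count_list (u @ [w]) w = N"
      using \<open>count_list (butlast (tl x)) w = N\<close> uv wv by (simp add: count_list_0_iff)
    then have "a \<in> PN x0 w N" using hx by (simp add: a_def PN_def)
    moreover have "e \<in> Eset w" using wv by (simp add: e_def Eset_def)
    ultimately show "x \<in> (\<lambda>(a, e). a @ e) ` (PN x0 w N \<times> Eset w)" using xe by force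
  qed
qed

lemma wt_append_w: "a \<noteq> [] \<Longrightarrow> last a = w \<Longrightarrow> wt p (a @ e) = wt p a * wt p (w # e)"
proof -
  assume a: "a \<noteq> []" "last a = w"
  have "a = butlast a @ [w]" using a by (metis append_butlast_last_id)
  then have "wt p (a @ e) = wt p (butlast a @ (w # e))" by (metis append.assoc append_Cons append_Nil)
  also have "\<dots> = wt p (butlast a @ [w]) * wt p (w # e)" using wt_split[of "w # e" p "butlast a"] by simp
  finally show ?thesis using \<open>a = butlast a @ [w]\<close> by metis
qed

definition IntN :: "('a::countable \<Rightarrow> 'a \<Rightarrow> real) \<Rightarrow> 'a \<Rightarrow> 'a \<Rightarrow> nat \<Rightarrow> ('a list \<Rightarrow> ennreal) \<Rightarrow> ennreal" where
  "IntN p x0 w N g = (\<integral>\<^sup>+a. ennreal (wt p a) * g (loop_erase a) \<partial>count_space (PN x0 w N))"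
definition rr :: "('a::countable \<Rightarrow> 'a \<Rightarrow> real) \<Rightarrow> 'a \<Rightarrow> ennreal" where
  "rr p w = (\<integral>\<^sup>+e. ennreal (wt p (w # e)) \<partial>count_space (Eset w))"
definition hh :: "('a::countable \<Rightarrow> 'a \<Rightarrow> real) \<Rightarrow> 'a \<Rightarrow> ('a list \<Rightarrow> ennreal) \<Rightarrow> 'a list \<Rightarrow> ennreal" where
  "hh p w g d = (\<integral>\<^sup>+e. ennreal (wt p (w # e)) * g (loop_erase (d @ e)) \<partial>count_space (Eset w))"

lemma K1:
  assumes p: "\<And>x y. 0 \<le> p x y" and N: "N \<ge> 1"
  shows "IntN p x0 w (Suc N) g = IntN p x0 w N (hh p w g)"
proof -
  have "IntN p x0 w (Suc N) g =
     (\<integral>\<^sup>+z. (\<lambda>x. ennreal (wt p x) * g (loop_erase x)) ((\<lambda>(a, e). a @ e) z) \<partial>count_space (PN x0 w N \<times> Eset w))"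
    unfolding IntN_def by (rule nn_integral_bij_count_space[OF PN_decomp[OF N], symmetric])
  also have "\<dots> = (\<integral>\<^sup>+a. \<integral>\<^sup>+e. ennreal (wt p (a @ e)) * g (loop_erase (a @ e)) \<partial>count_space (Eset w) \<partial>count_space (PN x0 w N))"
    by (subst nn_integral_count_space_prod) simp
  also have "\<dots> = (\<integral>\<^sup>+a. ennreal (wt p a) * hh p w g (loop_erase a) \<partial>count_space (PN x0 w N))"
  proof (rule nn_integral_cong)
    fix a assume "a \<in> space (count_space (PN x0 w N))"
    then have a: "a \<noteq> []" "last a = w" by (auto simp: PN_def)
    have "(\<integral>\<^sup>+e. ennreal (wt p (a @ e)) * g (loop_erase (a @ e)) \<partial>count_space (Eset w))
        = (\<integral>\<^sup>+e. ennreal (wt p a) * (ennreal (wt p (w # e)) * g (loop_erase (loop_erase a @ e))) \<partial>count_space (Eset w))"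
      by (rule nn_integral_cong)
        (simp add: wt_append_w[OF a] le_le ennreal_mult wt_nonneg[OF p] mult.assoc)
    also have "\<dots> = ennreal (wt p a) * hh p w g (loop_erase a)"
      unfolding hh_def by (rule nn_integral_cmult) simp
    finally show "(\<integral>\<^sup>+e. ennreal (wt p (a @ e)) * g (loop_erase (a @ e)) \<partial>count_space (Eset w))
        = ennreal (wt p a) * hh p w g (loop_erase a)" .
  qed
  finally show ?thesis unfolding IntN_def .
qed

lemma K2:
  assumes p: "\<And>x y. 0 \<le> p x y" and x0w: "x0 \<noteq> w"
  shows "IntN p x0 w 1 (hh p w g) = rr p w * IntN p x0 w 1 g"
proof -
  let ?F = "\<lambda>z. ennreal (wt p (fst z) * wt p (w # snd z)) * g (loop_erase (fst z))"
  have "IntN p x0 w 1 (hh p w g) = (\<integral>\<^sup>+a. \<integral>\<^sup>+e. ennreal (wt p a * wt p (w # e)) * g (loop_erase (a @ e))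
        \<partial>count_space (Eset w) \<partial>count_space (P1set x0 w))"
    unfolding IntN_def PN1[OF x0w] hh_def
  proof (rule nn_integral_cong)
    fix a
    show "ennreal (wt p a) * (\<integral>\<^sup>+e. ennreal (wt p (w # e)) * g (loop_erase (loop_erase a @ e)) \<partial>count_space (Eset w))
      = (\<integral>\<^sup>+e. ennreal (wt p a * wt p (w # e)) * g (loop_erase (a @ e)) \<partial>count_space (Eset w))"
      by (subst nn_integral_cmult[symmetric]) (simp_all add: le_le ennreal_mult wt_nonneg[OF p] mult.assoc)
  qed
  also have "\<dots> = (\<integral>\<^sup>+z. ennreal (wt p (fst z) * wt p (w # snd z)) * g (loop_erase (fst z @ snd z))
        \<partial>count_space (P1set x0 w \<times> Eset w))"
    by (subst nn_integral_count_space_prod) simp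
  also have "\<dots> = (\<integral>\<^sup>+z. ?F (Psi z) \<partial>count_space (P1set x0 w \<times> Eset w))"
    by (rule nn_integral_cong) (simp add: Psi_props)
  also have "\<dots> = (\<integral>\<^sup>+z. ?F z \<partial>count_space (P1set x0 w \<times> Eset w))"
    by (rule nn_integral_bij_count_space[OF Psi_bij])
  also have "\<dots> = (\<integral>\<^sup>+a. \<integral>\<^sup>+e. ennreal (wt p (w # e)) * (ennreal (wt p a) * g (loop_erase a))
        \<partial>count_space (Eset w) \<partial>count_space (P1set x0 w))"
    by (subst nn_integral_count_space_prod) (simp add: ennreal_mult wt_nonneg[OF p] mult_ac)
  also have "\<dots> = (\<integral>\<^sup>+a. rr p w * (ennreal (wt p a) * g (loop_erase a)) \<partial>count_space (P1set x0 w))"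
    unfolding rr_def by (subst nn_integral_multc) simp_all
  also have "\<dots> = rr p w * IntN p x0 w 1 g"
    unfolding IntN_def PN1[OF x0w] by (rule nn_integral_cmult) simp
  finally show ?thesis .
qed

lemma IntN_main:
  assumes p: "\<And>x y. 0 \<le> p x y" and x0w: "x0 \<noteq> w" and N: "N \<ge> 1"
  shows "IntN p x0 w N g = rr p w ^ (N - 1) * IntN p x0 w 1 g"
  using N
proof (induction N arbitrary: g rule: nat_induct_at_least)
  case base then show ?case by simp
next
  case (Suc N)
  have "IntN p x0 w (Suc N) g = IntN p x0 w N (hh p w g)" by (rule K1[OF p Suc.hyps])
  also have "\<dots> = rr p w ^ (N - 1) * IntN p x0 w 1 (hh p w g)" by (rule Suc.IH)
  also have "\<dots> = rr p w ^ (N - 1) * (rr p w * IntN p x0 w 1 g)" using K2[OF p x0w, where g=g] by (simp only:)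
  also have "\<dots> = rr p w ^ (Suc N - 1) * IntN p x0 w 1 g"
    using Suc.hyps by (cases N) (auto simp: mult_ac)
  finally show ?case .
qed

fun cnt :: "(nat \<Rightarrow> 'w \<Rightarrow> 'a option) \<Rightarrow> 'a \<Rightarrow> 'w \<Rightarrow> nat \<Rightarrow> nat" where
  "cnt X w \<omega> 0 = 0"
| "cnt X w \<omega> (Suc t) = cnt X w \<omega> t + (if X (Suc t) \<omega> = Some w then 1 else 0)"

lemma cnt_mono: "s \<le> t \<Longrightarrow> cnt X w \<omega> s \<le> cnt X w \<omega> t"
  by (induction t rule: dec_induct) auto

lemma cnt_const: "s \<le> t \<Longrightarrow> (\<And>m. s < m \<Longrightarrow> m \<le> t \<Longrightarrow> X m \<omega> \<noteq> Some w) \<Longrightarrow> cnt X w \<omega> t = cnt X w \<omega> s"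
  by (induction t rule: dec_induct) auto

lemma cnt_at: "0 < t \<Longrightarrow> X t \<omega> = Some w \<Longrightarrow> cnt X w \<omega> t = cnt X w \<omega> (t - 1) + 1"
  by (cases t) auto

lemma cnt_lt: "m < t \<Longrightarrow> X t \<omega> = Some w \<Longrightarrow> cnt X w \<omega> t \<ge> cnt X w \<omega> m + 1"
  using cnt_at[of t X \<omega> w] cnt_mono[of m "t - 1" X w \<omega>] by simp

lemma H1: "hit_time X w N \<omega> = enat t \<Longrightarrow> cnt X w \<omega> t = N \<and> (N \<ge> 1 \<longrightarrow> X t \<omega> = Some w)"
proof (induction N arbitrary: t)
  case 0 then show ?case by (simp add: zero_enat_def)
next
  case (Suc N)
  show ?case
  proof (cases "hit_time X w N \<omega>")
    case (enat s)
    have ex: "\<exists>m>s. X m \<omega> = Some w" and t: "t = (LEAST m. m > s \<and> X m \<omega> = Some w)"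
      using Suc.prems enat by (auto split: if_splits)
    have P: "t > s \<and> X t \<omega> = Some w" unfolding t using ex by (metis (mono_tags, lifting) LeastI)
    have nm: "X m \<omega> \<noteq> Some w" if "s < m" "m < t" for m
      using not_less_Least[of m "\<lambda>m. m > s \<and> X m \<omega> = Some w"] that t by auto
    have cs: "cnt X w \<omega> s = N" using Suc.IH[OF enat] by simp
    have "cnt X w \<omega> (t - 1) = cnt X w \<omega> s"
      by (rule cnt_const) (use P nm in auto)
    then show ?thesis using cnt_at[of t X \<omega> w] P cs by simp
  next
    case infinity then show ?thesis using Suc.prems by simp
  qed
qed

lemma H2: "N \<ge> 1 \<Longrightarrow> X t \<omega> = Some w \<Longrightarrow> cnt X w \<omega> t = N \<Longrightarrow> hit_time X w N \<omega> = enat t"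
proof (induction N arbitrary: t rule: nat_induct_at_least)
  case base
  have t0: "t > 0" using base by (cases t) auto
  have L: "(LEAST m. m > 0 \<and> X m \<omega> = Some w) = t"
  proof (rule Least_equality)
    show "0 < t \<and> X t \<omega> = Some w" using t0 base by simp
  next
    fix m assume m: "0 < m \<and> X m \<omega> = Some w"
    show "t \<le> m"
    proof (rule ccontr)
      assume "\<not> t \<le> m"
      then have "cnt X w \<omega> t \<ge> cnt X w \<omega> m + 1" using cnt_lt[of m t X \<omega> w] base by simp
      moreover have "cnt X w \<omega> m \<ge> 1" using cnt_at[of m X \<omega> w] m by simp
      ultimately show False using base by simp
    qed
  qed
  have h1: "hit_time X w 1 \<omega> = (if \<exists>m>0. X m \<omega> = Some w then enat (LEAST m. 0 < m \<and> X m \<omega> = Some w) else \<infinity>)"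
    by (simp add: zero_enat_def)
  show ?case unfolding h1 using L t0 base by auto
next
  case (Suc N)
  have t0: "t > 0" using Suc by (cases t) auto
  let ?M = "{m. 0 < m \<and> m < t \<and> X m \<omega> = Some w}"
  have Mne: "?M \<noteq> {}"
  proof
    assume M: "?M = {}"
    have "cnt X w \<omega> (t - 1) = cnt X w \<omega> 0"
    proof (rule cnt_const)
      fix m assume "0 < m" "m \<le> t - 1"
      then have "m \<notin> ?M \<Longrightarrow> X m \<omega> \<noteq> Some w" using t0 by simp
      then show "X m \<omega> \<noteq> Some w" using M by blast
    qed simp
    then show False using cnt_at[of t X \<omega> w] t0 Suc by simp
  qed
  have fin: "finite ?M" by (rule finite_subset[of _ "{..<t}"]) auto
  define s where "s = Max ?M"
  have sM: "s \<in> ?M" unfolding s_def using Max_in[OF fin Mne] .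
  have after: "X m \<omega> \<noteq> Some w" if "s < m" "m < t" for m
  proof
    assume "X m \<omega> = Some w"
    then have "m \<in> ?M" using that sM by simp
    then have "m \<le> s" unfolding s_def by (rule Max_ge[OF fin])
    then show False using that by simp
  qed
  have "cnt X w \<omega> (t - 1) = cnt X w \<omega> s" by (rule cnt_const) (use sM after in auto)
  then have cs: "cnt X w \<omega> s = N" using cnt_at[of t X \<omega> w] t0 Suc by simp
  have hs: "hit_time X w N \<omega> = enat s" using Suc.IH[of s] sM cs by simp
  have L: "(LEAST m. m > s \<and> X m \<omega> = Some w) = t"
  proof (rule Least_equality)
    show "s < t \<and> X t \<omega> = Some w" using sM Suc by simp
  next
    fix m assume "s < m \<and> X m \<omega> = Some w"
    then show "t \<le> m" using after by (meson not_le)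
  qed
  show ?case using hs L sM Suc.prems by auto
qed

definition Cyl :: "'w measure \<Rightarrow> (nat \<Rightarrow> 'w \<Rightarrow> 'a option) \<Rightarrow> 'a list \<Rightarrow> 'w set" where
  "Cyl M X xi = {\<omega> \<in> space M. \<forall>i < length xi. X i \<omega> = Some (xi ! i)}"
definition QN :: "'a \<Rightarrow> nat \<Rightarrow> 'a list set" where
  "QN w N = {xi. xi \<noteq> [] \<and> last xi = w \<and> count_list (tl xi) w = N}"

lemma cnt_cyl_aux:
  assumes "\<omega> \<in> Cyl M X xi" "t < length xi"
  shows "cnt X w \<omega> t = count_list (take t (tl xi)) w"
  using assms(2)
proof (induction t)
  case 0 then show ?case by simp
next
  case (Suc t)
  have lt: "t < length (tl xi)" using Suc.prems by simp
  have X: "X (Suc t) \<omega> = Some (xi ! Suc t)" using assms(1) Suc.prems by (simp add: Cyl_def)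
  have "take (Suc t) (tl xi) = take t (tl xi) @ [xi ! Suc t]"
    using lt by (simp add: take_Suc_conv_app_nth nth_tl)
  then show ?case using Suc X by simp
qed

lemma cnt_cyl: "\<omega> \<in> Cyl M X xi \<Longrightarrow> xi \<noteq> [] \<Longrightarrow> cnt X w \<omega> (length xi - 1) = count_list (tl xi) w"
  using cnt_cyl_aux[of \<omega> M X xi "length xi - 1" w] by simp

lemma cyl_path:
  assumes "xi \<in> QN w N" "N \<ge> 1" "\<omega> \<in> Cyl M X xi"
  shows "hit_time X w N \<omega> = enat (length xi - 1) \<and> path_upto X (length xi - 1) \<omega> = xi"
proof
  have ne: "xi \<noteq> []" and lx: "last xi = w" and cx: "count_list (tl xi) w = N" using assms(1) by (auto simp: QN_def)
  have "X (length xi - 1) \<omega> = Some (xi ! (length xi - 1))" using assms(3) ne by (simp add: Cyl_def)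
  then have "X (length xi - 1) \<omega> = Some w" using lx ne by (simp add: last_conv_nth)
  then show "hit_time X w N \<omega> = enat (length xi - 1)"
    using H2[OF assms(2)] cnt_cyl[OF assms(3) ne, of w] cx by simp
  show "path_upto X (length xi - 1) \<omega> = xi"
    unfolding path_upto_def
  proof (rule nth_equalityI)
    show "length (map (\<lambda>i. the (X i \<omega>)) [0..<Suc (length xi - 1)]) = length xi" using ne by simp
  next
    fix i assume "i < length (map (\<lambda>i. the (X i \<omega>)) [0..<Suc (length xi - 1)])"
    then have i: "i < length xi" using ne by simp
    then have "X i \<omega> = Some (xi ! i)" using assms(3) by (simp add: Cyl_def)
    then show "map (\<lambda>i. the (X i \<omega>)) [0..<Suc (length xi - 1)] ! i = xi ! i" using i ne
      by (simp del: upt_Suc)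
  qed
qed

lemma absorb:
  assumes "\<forall>n. \<forall>\<omega>\<in>space M. X n \<omega> = None \<longrightarrow> X (Suc n) \<omega> = None" "\<omega> \<in> space M" "i \<le> j" "X i \<omega> = None"
  shows "X j \<omega> = None"
  using assms(3,4)
proof (induction j rule: dec_induct)
  case base then show ?case by simp
next
  case (step n)
  then show ?case using assms(1,2) by blast
qed

lemma event_eq:
  assumes abs: "\<forall>n. \<forall>\<omega>\<in>space M. X n \<omega> = None \<longrightarrow> X (Suc n) \<omega> = None" and N: "N \<ge> 1"
  shows "{\<omega>\<in>space M. hit_time X w N \<omega> < \<infinity> \<and> Q (loop_erase (path_upto X (the_enat (hit_time X w N \<omega>)) \<omega>))}
     = (\<Union>xi\<in>{xi \<in> QN w N. Q (loop_erase xi)}. Cyl M X xi)"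
proof (intro set_eqI iffI)
  fix \<omega> assume "\<omega> \<in> {\<omega>\<in>space M. hit_time X w N \<omega> < \<infinity> \<and> Q (loop_erase (path_upto X (the_enat (hit_time X w N \<omega>)) \<omega>))}"
  then have om: "\<omega> \<in> space M" and fin: "hit_time X w N \<omega> < \<infinity>"
    and q: "Q (loop_erase (path_upto X (the_enat (hit_time X w N \<omega>)) \<omega>))" by auto
  obtain t where t: "hit_time X w N \<omega> = enat t" using fin by (cases "hit_time X w N \<omega>") auto
  have ct: "cnt X w \<omega> t = N" and Xt: "X t \<omega> = Some w" using H1[OF t] N by auto
  have nn: "X i \<omega> \<noteq> None" if "i \<le> t" for i
    using absorb[OF abs om that] Xt by auto
  define xi where "xi = path_upto X t \<omega>"
  have len: "length xi = Suc t" by (simp add: xi_def path_upto_def)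
  have nth: "i < Suc t \<Longrightarrow> xi ! i = the (X i \<omega>)" for i
    by (simp add: xi_def path_upto_def del: upt_Suc)
  have cyl: "\<omega> \<in> Cyl M X xi" unfolding Cyl_def
  proof (intro CollectI conjI allI impI)
    fix i assume "i < length xi"
    then have i: "i < Suc t" using len by simp
    then have "X i \<omega> \<noteq> None" using nn by simp
    then show "X i \<omega> = Some (xi ! i)" using nth[OF i] by auto
  qed (rule om)
  have ne: "xi \<noteq> []" using len by auto
  have "last xi = w" using nth[of t] Xt len ne by (simp add: last_conv_nth)
  moreover have "count_list (tl xi) w = N" using cnt_cyl[OF cyl ne, of w] len ct by simp
  ultimately have "xi \<in> QN w N" using ne by (simp add: QN_def)
  moreover have "Q (loop_erase xi)" using q t by (simp add: xi_def)
  ultimately show "\<omega> \<in> (\<Union>xi\<in>{xi \<in> QN w N. Q (loop_erase xi)}. Cyl M X xi)" using cyl by blast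
next
  fix \<omega> assume "\<omega> \<in> (\<Union>xi\<in>{xi \<in> QN w N. Q (loop_erase xi)}. Cyl M X xi)"
  then obtain xi where xi: "xi \<in> QN w N" "Q (loop_erase xi)" and cyl: "\<omega> \<in> Cyl M X xi" by auto
  have om: "\<omega> \<in> space M" using cyl by (simp add: Cyl_def)
  show "\<omega> \<in> {\<omega>\<in>space M. hit_time X w N \<omega> < \<infinity> \<and> Q (loop_erase (path_upto X (the_enat (hit_time X w N \<omega>)) \<omega>))}"
    using cyl_path[OF xi(1) N cyl] xi(2) om by simp
qed

lemma cyl_disj:
  assumes N: "N \<ge> 1" and that: "A \<subseteq> QN w N"
  shows "disjoint_family_on (Cyl M X) A"
  unfolding disjoint_family_on_def
proof (intro ballI impI)
  fix xi xi' assume xi: "xi \<in> A" "xi' \<in> A" "xi \<noteq> xi'"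
  show "Cyl M X xi \<inter> Cyl M X xi' = {}"
  proof (rule ccontr)
    assume "Cyl M X xi \<inter> Cyl M X xi' \<noteq> {}"
    then obtain \<omega> where "\<omega> \<in> Cyl M X xi" "\<omega> \<in> Cyl M X xi'" by blast
    then have P1: "hit_time X w N \<omega> = enat (length xi - 1) \<and> path_upto X (length xi - 1) \<omega> = xi"
      and P2: "hit_time X w N \<omega> = enat (length xi' - 1) \<and> path_upto X (length xi' - 1) \<omega> = xi'"
      using cyl_path[OF _ N] xi(1,2) that by (meson subsetD)+
    then have "length xi - 1 = length xi' - 1" by simp
    then show False using xi(3) P1 P2 by metis
  qed
qed

lemma event_emeasure:
  assumes chain: "sub_markov_chain M X p x0" and N: "N \<ge> 1"
  shows "emeasure M {\<omega>\<in>space M. hit_time X w N \<omega> < \<infinity> \<and> Q (loop_erase (path_upto X (the_enat (hit_time X w N \<omega>)) \<omega>))}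
     = IntN p x0 w N (\<lambda>l. if Q l then 1 else 0)"
proof -
  have ps: "prob_space M" and sub: "substochastic p"
    and meas: "\<And>n. X n \<in> measurable M (count_space UNIV)"
    and abs: "\<forall>n. \<forall>\<omega>\<in>space M. X n \<omega> = None \<longrightarrow> X (Suc n) \<omega> = None"
    and fdd: "\<And>n \<xi>. measure M {\<omega>\<in>space M. \<forall>i\<le>n. X i \<omega> = Some (\<xi> i)} =
        (if \<xi> 0 = x0 then (\<Prod>i<n. p (\<xi> i) (\<xi> (Suc i))) else 0)"
    using chain unfolding sub_markov_chain_def by blast+
  interpret prob_space M by (rule ps)
  note [measurable] = meas
  have cyl_sets: "Cyl M X xi \<in> sets M" for xi
    unfolding Cyl_def by measurable
  have emc: "emeasure M (Cyl M X xi) = (if hd xi = x0 then ennreal (wt p xi) else 0)" if ne: "xi \<noteq> []" for xi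
  proof -
    have "Cyl M X xi = {\<omega>\<in>space M. \<forall>i\<le>length xi - 1. X i \<omega> = Some ((\<lambda>i. xi ! i) i)}"
      using ne unfolding Cyl_def by (auto simp: less_Suc_eq_le[symmetric])
    then have "measure M (Cyl M X xi) = (if xi ! 0 = x0 then (\<Prod>i<length xi - 1. p (xi ! i) (xi ! Suc i)) else 0)"
      using fdd by simp
    then show ?thesis using ne by (simp add: emeasure_eq_measure wt_prod hd_conv_nth)
  qed
  let ?A = "{xi \<in> QN w N. Q (loop_erase xi)}"
  have "emeasure M {\<omega>\<in>space M. hit_time X w N \<omega> < \<infinity> \<and> Q (loop_erase (path_upto X (the_enat (hit_time X w N \<omega>)) \<omega>))}
      = emeasure M (\<Union>xi\<in>?A. Cyl M X xi)" using event_eq[OF abs N] by simp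
  also have "\<dots> = (\<integral>\<^sup>+xi. emeasure M (Cyl M X xi) \<partial>count_space ?A)"
    by (rule emeasure_UN_countable) (auto intro: cyl_sets cyl_disj[OF N] countableI_type)
  also have "\<dots> = (\<integral>\<^sup>+xi. (if hd xi = x0 then ennreal (wt p xi) else 0) \<partial>count_space ?A)"
    by (rule nn_integral_cong) (simp add: emc QN_def)
  also have "\<dots> = (\<integral>\<^sup>+xi. (if hd xi = x0 then ennreal (wt p xi) else 0) * indicator ?A xi \<partial>count_space UNIV)"
    by (rule nn_integral_count_space_indicator) simp
  also have "\<dots> = (\<integral>\<^sup>+xi. ennreal (wt p xi) * (if Q (loop_erase xi) then 1 else 0) * indicator (PN x0 w N) xi \<partial>count_space UNIV)"
    by (rule nn_integral_cong) (auto simp: QN_def PN_def split: split_indicator)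
  also have "\<dots> = IntN p x0 w N (\<lambda>l. if Q l then 1 else 0)"
    unfolding IntN_def by (rule nn_integral_count_space_indicator[symmetric]) simp
  finally show ?thesis .
qed

theorem mainTheorem18:
  fixes M :: "'w measure" and X :: "nat \<Rightarrow> 'w \<Rightarrow> 'a::countable option"
    and p :: "'a \<Rightarrow> 'a \<Rightarrow> real" and x0 w :: 'a and N :: nat
  assumes chain: "sub_markov_chain M X p x0"
    and w_ne: "w \<noteq> x0"
    and N_pos: "N \<ge> 1"
    and pos: "measure M {\<omega>\<in>space M. hit_time X w N \<omega> < \<infinity>} > 0"
  shows "\<forall>\<gamma> :: 'a list.
     measure M {\<omega>\<in>space M. hit_time X w N \<omega> < \<infinity> \<and>
                   loop_erase (path_upto X (the_enat (hit_time X w N \<omega>)) \<omega>) = \<gamma>}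
       / measure M {\<omega>\<in>space M. hit_time X w N \<omega> < \<infinity>}
   = measure M {\<omega>\<in>space M. hit_time X w 1 \<omega> < \<infinity> \<and>
                   loop_erase (path_upto X (the_enat (hit_time X w 1 \<omega>)) \<omega>) = \<gamma>}
       / measure M {\<omega>\<in>space M. hit_time X w 1 \<omega> < \<infinity>}"
proof
  fix \<gamma> :: "'a list"
  have p: "\<And>x y. 0 \<le> p x y" using chain by (simp add: sub_markov_chain_def substochastic_def)
  have x0w: "x0 \<noteq> w" using w_ne by simp
  define c where "c = enn2real (rr p w ^ (N - 1))"
  have gen: "measure M {\<omega>\<in>space M. hit_time X w K \<omega> < \<infinity> \<and> Q (loop_erase (path_upto X (the_enat (hit_time X w K \<omega>)) \<omega>))}
      = enn2real (IntN p x0 w K (\<lambda>l. if Q l then 1 else 0))" if "K \<ge> 1" for K Q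
    unfolding measure_def using event_emeasure[OF chain that, of w Q] by simp
  have tot: "{\<omega>\<in>space M. hit_time X w K \<omega> < \<infinity>} =
      {\<omega>\<in>space M. hit_time X w K \<omega> < \<infinity> \<and> (\<lambda>l. True) (loop_erase (path_upto X (the_enat (hit_time X w K \<omega>)) \<omega>))}" for K
    by simp
  have scale: "enn2real (IntN p x0 w N g) = c * enn2real (IntN p x0 w 1 g)" for g
    unfolding c_def IntN_main[OF p x0w N_pos] by (simp add: enn2real_mult)
  have a: "measure M {\<omega>\<in>space M. hit_time X w N \<omega> < \<infinity> \<and>
                   loop_erase (path_upto X (the_enat (hit_time X w N \<omega>)) \<omega>) = \<gamma>}
     = c * measure M {\<omega>\<in>space M. hit_time X w 1 \<omega> < \<infinity> \<and>
                   loop_erase (path_upto X (the_enat (hit_time X w 1 \<omega>)) \<omega>) = \<gamma>}"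
    using gen[OF N_pos, of "\<lambda>l. l = \<gamma>"] gen[of 1 "\<lambda>l. l = \<gamma>"] scale by simp
  have b: "measure M {\<omega>\<in>space M. hit_time X w N \<omega> < \<infinity>} = c * measure M {\<omega>\<in>space M. hit_time X w 1 \<omega> < \<infinity>}"
    unfolding tot using gen[OF N_pos, of "\<lambda>l. True"] gen[of 1 "\<lambda>l. True"] scale by simp
  have c0: "c \<noteq> 0" using pos b by auto
  show "measure M {\<omega>\<in>space M. hit_time X w N \<omega> < \<infinity> \<and>
                   loop_erase (path_upto X (the_enat (hit_time X w N \<omega>)) \<omega>) = \<gamma>}
       / measure M {\<omega>\<in>space M. hit_time X w N \<omega> < \<infinity>}
   = measure M {\<omega>\<in>space M. hit_time X w 1 \<omega> < \<infinity> \<and>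
                   loop_erase (path_upto X (the_enat (hit_time X w 1 \<omega>)) \<omega>) = \<gamma>}
       / measure M {\<omega>\<in>space M. hit_time X w 1 \<omega> < \<infinity>}"
    unfolding a b using c0 by simp
qed

end
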